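(* Fix $1\leq p\leq\infty$ with $p\neq 2$ and set $c_p:=2/p-1$. Then $\|c_p\varepsilon\overline{z}+1+\varepsilon z\|_p<\|1+\varepsilon z\|_p$ for every sufficiently small $\varepsilon>0$, where $\|\cdot\|_p$ is the norm of $L^p(\mathbb{T})$.
   Context: $\mathbb{T}$ is the unit circle with normalized arc-length measure, and $z$ denotes the variable on $\mathbb{T}$. *)

theory Defs
  imports "HOL-Probability.Probability"
begin

text \<open>Norm of L^p(T), T the unit circle with normalized arc-length measure,
  parametrised by t in [0, 2 pi] via z = cis t.\<close>

definition Lp_T :: "ereal \<Rightarrow> (complex \<Rightarrow> complex) \<Rightarrow> real" where
  "Lp_T p f =
     (if p = \<infinity> then
        real_of_ereal (esssup (lebesgue_on {0..2*pi}) (\<lambda>t. ereal (cmod (f (cis t)))))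
      else
        ((1 / (2*pi)) * integral {0..2*pi} (\<lambda>t. cmod (f (cis t)) powr real_of_ereal p))
          powr (1 / real_of_ereal p))"

definition c_p :: "ereal \<Rightarrow> real" where
  "c_p p = (if p = \<infinity> then -1 else 2 / real_of_ereal p - 1)"

end

theory Submission
  imports Defs
begin


lemma powr_bound_half:
  fixes x b :: real
  assumes "1/2 \<le> x" "x \<le> 3/2"
  shows "x powr b \<le> 2 powr \<bar>b\<bar>"
proof (cases "b \<ge> 0")
  case True
  have "x powr b \<le> 2 powr b" using assms True by (intro powr_mono2) auto
  then show ?thesis using True by simp
next
  case False
  have "x powr b \<le> (1/2) powr b" using assms False by (intro powr_mono2') auto
  also have "\<dots> = 2 powr (-b)" by (simp add: powr_divide powr_minus_divide)
  finally show ?thesis using False by simp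
qed

lemma taylor2_powr:
  fixes a :: real
  obtains K where "\<And>u. \<bar>u\<bar> \<le> 1/2 \<Longrightarrow>
     \<bar>(1+u) powr a - (1 + a*u + a*(a-1)/2*u^2)\<bar> \<le> K * \<bar>u\<bar>^3"
proof -
  define diff where "diff = (\<lambda>m (x::real). (\<Prod>j<m. (a - real j)) * (1+x) powr (a - real m))"
  define K where "K = \<bar>a*(a-1)*(a-2)\<bar> / 6 * 2 powr \<bar>a-3\<bar>"
  have "\<bar>(1+u) powr a - (1 + a*u + a*(a-1)/2*u^2)\<bar> \<le> K * \<bar>u\<bar>^3" if u: "\<bar>u\<bar> \<le> 1/2" for u
  proof -
    have D: "\<forall>m t. m < 3 \<and> \<bar>t\<bar> \<le> \<bar>u\<bar> \<longrightarrow> DERIV (diff m) t :> diff (Suc m) t"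
    proof (intro allI impI)
      fix m :: nat and t :: real assume "m < 3 \<and> \<bar>t\<bar> \<le> \<bar>u\<bar>"
      then have t: "1 + t > 0" using u by auto
      have "((\<lambda>x. (1+x) powr (a - real m)) has_real_derivative (a - real m) * (1+t) powr (a - real m - 1)) (at t)"
        using t by (auto intro!: derivative_eq_intros)
      then have "DERIV (diff m) t :> (\<Prod>j<m. (a - real j)) * ((a - real m) * (1+t) powr (a - real m - 1))"
        unfolding diff_def by (intro DERIV_cmult) 
      then show "DERIV (diff m) t :> diff (Suc m) t"
        unfolding diff_def by (simp add: algebra_simps)
    qed
    obtain t where t: "\<bar>t\<bar> \<le> \<bar>u\<bar>" and
      eq: "diff 0 u = (\<Sum>m<3. diff m 0 / (fact m) * u ^ m) + diff 3 t / (fact 3) * u ^ 3"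
      using Maclaurin_bi_le[of diff "diff 0" 3 u, OF refl D] by blast
    have s: "(\<Sum>m<3. diff m 0 / (fact m) * u ^ m) = 1 + a*u + a*(a-1)/2*u^2"
      by (simp add: diff_def eval_nat_numeral fact_numeral lessThan_Suc algebra_simps)
    have d0: "diff 0 u = (1+u) powr a" by (simp add: diff_def)
    have "\<bar>(1+u) powr a - (1 + a*u + a*(a-1)/2*u^2)\<bar> = \<bar>diff 3 t / 6 * u^3\<bar>"
      using eq s d0 by (simp add: fact_numeral)
    also have "\<dots> = \<bar>(a*(a-1)*(a-2)) * (1+t) powr (a-3) * u^3\<bar> / 6"
      by (simp add: diff_def eval_nat_numeral lessThan_Suc algebra_simps)
    also have "\<dots> = \<bar>a*(a-1)*(a-2)\<bar> / 6 * (1+t) powr (a-3) * \<bar>u\<bar>^3"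
      by (simp add: abs_mult power_abs)
    also have "\<dots> \<le> K * \<bar>u\<bar>^3"
      unfolding K_def using t u
      by (intro mult_right_mono mult_left_mono powr_bound_half) auto
    finally show ?thesis .
  qed
  then show ?thesis using that by blast
qed


definition uu :: "real \<Rightarrow> real \<Rightarrow> real \<Rightarrow> real" where
  "uu c e t = 2*e*(1+c)*cos t + e^2*((1+c)^2*(cos t)^2 + (1-c)^2*(sin t)^2)"

definition PP :: "real \<Rightarrow> real \<Rightarrow> real \<Rightarrow> real \<Rightarrow> real" where
  "PP a c e t = 1 + a * uu c e t + a*(a-1)/2 * (2*e*(1+c)*cos t)^2"

definition IV :: "real \<Rightarrow> real \<Rightarrow> real \<Rightarrow> real" where
  "IV a c e = 2*pi + a*pi*e^2*((1+c)^2+(1-c)^2) + 2*pi*a*(a-1)*e^2*(1+c)^2"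

lemma int_cos: "(cos has_integral 0) {0..2*pi}"
proof -
  have "(cos has_integral sin (2*pi) - sin 0) {0..2*pi}"
    by (intro fundamental_theorem_of_calculus) (auto intro!: derivative_eq_intros simp: has_real_derivative_iff_has_vector_derivative[symmetric])
  then show ?thesis by simp
qed

lemma int_cos2: "((\<lambda>t. (cos t)^2) has_integral pi) {0..2*pi}"
proof -
  let ?F = "\<lambda>t::real. t/2 + sin t * cos t / 2"
  have D: "\<forall>x\<in>{0..2*pi}. (?F has_vector_derivative (cos x)^2) (at x within {0..2*pi})"
    proof
      fix x :: real
      have "(?F has_real_derivative 1/2 + (cos x * cos x - sin x * sin x)/2) (at x)"
        by (auto intro!: derivative_eq_intros simp: field_simps)
      also have "1/2 + (cos x * cos x - sin x * sin x)/2 = (cos x)^2"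
        using sin_cos_squared_add[of x] by (simp add: power2_eq_square field_simps)
      finally show "(?F has_vector_derivative (cos x)^2) (at x within {0..2*pi})"
        by (simp add: has_real_derivative_iff_has_vector_derivative[symmetric] has_field_derivative_at_within)
    qed
  have "((\<lambda>t. (cos t)^2) has_integral ?F (2*pi) - ?F 0) {0..2*pi}"
    by (rule fundamental_theorem_of_calculus) (use D in auto)
  then show ?thesis by simp
qed

lemma int_sin2: "((\<lambda>t. (sin t)^2) has_integral pi) {0..2*pi}"
proof -
  let ?F = "\<lambda>t::real. t/2 - sin t * cos t / 2"
  have D: "\<forall>x\<in>{0..2*pi}. (?F has_vector_derivative (sin x)^2) (at x within {0..2*pi})"
    proof
      fix x :: real
      have "(?F has_real_derivative 1/2 - (cos x * cos x - sin x * sin x)/2) (at x)"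
        by (auto intro!: derivative_eq_intros simp: field_simps)
      also have "1/2 - (cos x * cos x - sin x * sin x)/2 = (sin x)^2"
        using sin_cos_squared_add[of x] by (simp add: power2_eq_square field_simps)
      finally show "(?F has_vector_derivative (sin x)^2) (at x within {0..2*pi})"
        by (simp add: has_real_derivative_iff_has_vector_derivative[symmetric] has_field_derivative_at_within)
    qed
  have "((\<lambda>t. (sin t)^2) has_integral ?F (2*pi) - ?F 0) {0..2*pi}"
    by (rule fundamental_theorem_of_calculus) (use D in auto)
  then show ?thesis by simp
qed

lemma int_PP: "(PP a c e has_integral IV a c e) {0..2*pi}"
proof -
  define A where "A = a*2*e*(1+c)"
  define B where "B = a*e^2*(1+c)^2 + a*(a-1)/2*(2*e*(1+c))^2"
  define D where "D = a*e^2*(1-c)^2"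
  have eq: "PP a c e = (\<lambda>t. 1 + A * cos t + B * (cos t)^2 + D * (sin t)^2)"
    by (rule ext) (simp add: PP_def uu_def A_def B_def D_def algebra_simps power2_eq_square)
  have "((\<lambda>t. 1 + A * cos t + B * (cos t)^2 + D * (sin t)^2) has_integral
        (2*pi - 0) + A * 0 + B * pi + D * pi) {0..2*pi}"
    by (intro has_integral_add has_integral_mult_right int_cos int_cos2 int_sin2)
       (use has_integral_const_real[of "1::real" 0 "2*pi"] in simp)
  moreover have "(2*pi - 0) + A * 0 + B * pi + D * pi = IV a c e"
    unfolding IV_def B_def D_def by (simp add: power2_eq_square field_simps)
  ultimately show ?thesis by (simp add: eq)
qed


lemma int_bound:
  fixes a c :: real
  obtains C \<delta> where "\<delta> > 0" "\<delta> \<le> 1" "\<And>e t. 0 < e \<Longrightarrow> e < \<delta> \<Longrightarrow> \<bar>uu c e t\<bar> \<le> 1/2"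
    "\<And>e. 0 < e \<Longrightarrow> e < \<delta> \<Longrightarrow>
       \<bar>integral {0..2*pi} (\<lambda>t. (1 + uu c e t) powr a) - IV a c e\<bar> \<le> C * e^3"
proof -
  obtain K where K: "\<And>u. \<bar>u\<bar> \<le> 1/2 \<Longrightarrow>
     \<bar>(1+u) powr a - (1 + a*u + a*(a-1)/2*u^2)\<bar> \<le> K * \<bar>u\<bar>^3"
    using taylor2_powr by blast
  define K' where "K' = max K 0"
  define M where "M = (1+c)^2 + (1-c)^2"
  have M0: "M \<ge> 0" by (simp add: M_def)
  define B where "B = 2*\<bar>1+c\<bar> + M + 1"
  have B1: "B \<ge> 1" unfolding B_def using M0 by simp
  define \<delta> where "\<delta> = min 1 (1/(2*B))"
  have dpos: "\<delta> > 0" using B1 by (simp add: \<delta>_def)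
  define C0 where "C0 = K' * B^3 + \<bar>a*(a-1)\<bar> * B^2"
  have ub: "\<bar>uu c e t\<bar> \<le> e * B" and ub2: "\<bar>uu c e t\<bar> \<le> 1/2"
    and Q: "\<bar>uu c e t - 2*e*(1+c)*cos t\<bar> \<le> e^2 * B"
    and v: "\<bar>2*e*(1+c)*cos t\<bar> \<le> e * (2*\<bar>1+c\<bar>)"
    if e: "0 < e" "e < \<delta>" for e t
  proof -
    have e1: "e \<le> 1" using e by (simp add: \<delta>_def)
    have "e * (2*B) < 1" using e B1 by (simp add: \<delta>_def field_simps)
    then have eB: "e * B \<le> 1/2" by simp
    have c2: "(cos t)^2 \<le> 1" and s2: "(sin t)^2 \<le> 1"
      using sin_cos_squared_add[of t] zero_le_power2[of "sin t"] zero_le_power2[of "cos t"] by linarith+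
    have "(1+c)^2*(cos t)^2 \<le> (1+c)^2" using c2 by (simp add: mult_left_le)
    moreover have "(1-c)^2*(sin t)^2 \<le> (1-c)^2" using s2 by (simp add: mult_left_le)
    ultimately have Qb: "\<bar>(1+c)^2*(cos t)^2 + (1-c)^2*(sin t)^2\<bar> \<le> M"
      unfolding M_def by simp
    have Q': "\<bar>uu c e t - 2*e*(1+c)*cos t\<bar> \<le> e^2 * M"
    proof -
      have "\<bar>uu c e t - 2*e*(1+c)*cos t\<bar> = e^2 * \<bar>(1+c)^2*(cos t)^2 + (1-c)^2*(sin t)^2\<bar>"
        by (simp add: uu_def abs_mult)
      also have "\<dots> \<le> e^2 * M" using Qb by (intro mult_left_mono) auto
      finally show ?thesis .
    qed
    have "e^2 * M \<le> e^2 * B" using B_def abs_ge_zero[of "1+c"] by (intro mult_left_mono) auto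
    then show "\<bar>uu c e t - 2*e*(1+c)*cos t\<bar> \<le> e^2 * B" using Q' by linarith
    have cs: "\<bar>cos t\<bar> \<le> 1" by simp
    have "\<bar>2*e*(1+c)*cos t\<bar> = e * (2*\<bar>1+c\<bar>) * \<bar>cos t\<bar>" using e by (simp add: abs_mult)
    also have "\<dots> \<le> e * (2*\<bar>1+c\<bar>)" using cs e by (intro mult_left_le) auto
    finally show v: "\<bar>2*e*(1+c)*cos t\<bar> \<le> e * (2*\<bar>1+c\<bar>)" .
    have "e*e \<le> e*1" using e1 e by (intro mult_left_mono) auto
    then have "e^2 * M \<le> e * M" using M0 by (intro mult_right_mono) (auto simp: power2_eq_square)
    then have "\<bar>uu c e t\<bar> \<le> e * (2*\<bar>1+c\<bar>) + e * M" using Q' v by linarith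
    also have "\<dots> \<le> e * B" using e by (simp add: B_def algebra_simps)
    finally show "\<bar>uu c e t\<bar> \<le> e * B" .
    then show "\<bar>uu c e t\<bar> \<le> 1/2" using eB by linarith
  qed
  have pw: "\<bar>(1 + uu c e t) powr a - PP a c e t\<bar> \<le> C0 * e^3" if e: "0 < e" "e < \<delta>" for e t
  proof -
    define u where "u = uu c e t"
    define v where "v = 2*e*(1+c)*cos t"
    define X where "X = (1 + u) powr a"
    define Y where "Y = 1 + a*u + a*(a-1)/2*u^2"
    have "PP a c e t = Y - a*(a-1)/2 * ((u - v) * (u + v))"
      by (simp add: PP_def Y_def u_def v_def algebra_simps power2_eq_square)
    then have "\<bar>X - PP a c e t\<bar> = \<bar>(X - Y) + a*(a-1)/2 * ((u - v) * (u + v))\<bar>" by simp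
    also have "\<dots> \<le> \<bar>X - Y\<bar> + \<bar>a*(a-1)/2 * ((u - v) * (u + v))\<bar>" by (rule abs_triangle_ineq)
    also have "\<dots> = \<bar>X - Y\<bar> + \<bar>a*(a-1)\<bar>/2 * (\<bar>u - v\<bar> * \<bar>u + v\<bar>)" by (simp add: abs_mult)
    also have "\<dots> \<le> K' * (e*B)^3 + \<bar>a*(a-1)\<bar>/2 * ((e^2*B) * (2*e*B))"
    proof (intro add_mono mult_left_mono)
      have "\<bar>X - Y\<bar> \<le> K * \<bar>u\<bar>^3" unfolding X_def Y_def u_def using K ub2[OF e] by blast
      also have "\<dots> \<le> K' * \<bar>u\<bar>^3" by (simp add: K'_def mult_right_mono)
      also have "\<dots> \<le> K' * (e*B)^3" unfolding u_def using ub[OF e] by (intro mult_left_mono power_mono) (auto simp: K'_def)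
      finally show "\<bar>X - Y\<bar> \<le> K' * (e*B)^3" .
    next
      have "\<bar>u + v\<bar> \<le> \<bar>u\<bar> + \<bar>v\<bar>" by (rule abs_triangle_ineq)
      also have "\<dots> \<le> e * B + e * (2*\<bar>1+c\<bar>)" using ub[OF e, of t] v[OF e, of t] unfolding u_def v_def by linarith
      also have "\<dots> \<le> 2*e*B" using e by (simp add: B_def algebra_simps M0)
      finally have s: "\<bar>u + v\<bar> \<le> 2*e*B" .
      show "\<bar>u - v\<bar> * \<bar>u + v\<bar> \<le> (e^2*B) * (2*e*B)"
        using Q[OF e] s B1 unfolding u_def v_def by (intro mult_mono) auto
    qed auto
    also have "\<dots> = C0 * e^3" by (simp add: C0_def power2_eq_square power3_eq_cube algebra_simps)
    finally show ?thesis unfolding X_def u_def .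
  qed
  have ib: "\<bar>integral {0..2*pi} (\<lambda>t. (1 + uu c e t) powr a) - IV a c e\<bar> \<le> (C0 * e^3) * (2*pi)"
    if e: "0 < e" "e < \<delta>" for e
  proof -
    have c1: "continuous_on {0..2*pi} (\<lambda>t. 1 + uu c e t)"
      unfolding uu_def by (intro continuous_intros)
    have cont: "continuous_on {0..2*pi} (\<lambda>t. (1 + uu c e t) powr a)"
    proof (rule continuous_on_powr[OF c1 continuous_on_const], intro ballI)
      fix t show "1 + uu c e t \<noteq> 0" using ub2[OF e, of t] by linarith
    qed
    have "((\<lambda>t. (1 + uu c e t) powr a - PP a c e t) has_integral
            integral {0..2*pi} (\<lambda>t. (1 + uu c e t) powr a) - IV a c e) {0..2*pi}"
      by (intro has_integral_diff int_PP integrable_integral integrable_continuous_interval cont)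
    moreover have "0 \<le> C0 * e^3" unfolding C0_def K'_def using e B1 by (intro mult_nonneg_nonneg add_nonneg_nonneg) auto
    ultimately have "norm (integral {0..2*pi} (\<lambda>t. (1 + uu c e t) powr a) - IV a c e) \<le> (C0 * e^3) * Henstock_Kurzweil_Integration.content {0..2*pi}"
      using pw[OF e] by (intro has_integral_bound_real[where f="\<lambda>t. (1 + uu c e t) powr a - PP a c e t"]) auto
    then show ?thesis by simp
  qed
  show ?thesis
  proof (rule that[of \<delta> "C0 * 2 * pi"])
    show "0 < \<delta>" by (rule dpos)
    show "\<delta> \<le> 1" by (simp add: \<delta>_def)
    show "\<bar>uu c e t\<bar> \<le> 1/2" if "0 < e" "e < \<delta>" for e t using ub2 that by blast
    show "\<bar>integral {0..2*pi} (\<lambda>t. (1 + uu c e t) powr a) - IV a c e\<bar> \<le> C0 * 2 * pi * e^3"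
      if "0 < e" "e < \<delta>" for e using ib[OF that] by (simp add: algebra_simps)
  qed
qed


lemma cmod_eq:
  fixes r c e t :: real
  shows "cmod (complex_of_real (c*e) * cnj (cis t) + 1 + complex_of_real e * cis t) powr r
         = (1 + uu c e t) powr (r/2)"
proof -
  define w where "w = complex_of_real (c*e) * cnj (cis t) + 1 + complex_of_real e * cis t"
  have "(cmod w)^2 = 1 + uu c e t"
    unfolding cmod_power2 w_def uu_def by (simp add: power2_eq_square algebra_simps)
  moreover have "cmod w powr r = ((cmod w)^2) powr (r/2)"
    by (simp add: powr_powr flip: powr_numeral)
  ultimately show ?thesis unfolding w_def by simp
qed

lemma cmod_eq0:
  fixes r e t :: real
  shows "cmod (1 + complex_of_real e * cis t) powr r = (1 + uu 0 e t) powr (r/2)"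
  using cmod_eq[of 0 e t r] by simp

lemma leb_pos: "emeasure (lebesgue_on {0..2*pi}) {0..pi/3} = ennreal (pi/3)"
proof -
  have "emeasure (lebesgue_on {0..2*pi}) {0..pi/3} = emeasure lebesgue {0..pi/3}"
    by (rule emeasure_restrict_space) auto
  also have "\<dots> = ennreal (pi/3)" by simp
  finally show ?thesis .
qed



lemma IV_diff:
  fixes a e :: real assumes "a \<noteq> 0"
  shows "IV a (1/a - 1) e - IV a 0 e = - 2*pi*(a-1)^2*e^2"
  using assms unfolding IV_def by (simp add: field_simps power2_eq_square)

lemma int_nonneg_powr: "0 \<le> integral {0..2*pi} (\<lambda>t. (x t::real) powr a)"
proof (cases "(\<lambda>t. x t powr a) integrable_on {0..2*pi}")
  case True then show ?thesis by (rule integral_nonneg) auto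
qed (simp add: not_integrable_integral)

lemma finite_case:
  fixes r :: real assumes r: "1 \<le> r" "r \<noteq> 2"
  shows "\<forall>\<^sub>F e in at_right (0::real).
    ((1/(2*pi)) * integral {0..2*pi} (\<lambda>t. (1 + uu (2/r - 1) e t) powr (r/2))) powr (1/r)
    < ((1/(2*pi)) * integral {0..2*pi} (\<lambda>t. (1 + uu 0 e t) powr (r/2))) powr (1/r)"
proof -
  define a where "a = r/2"
  have a0: "a \<noteq> 0" and a1: "a \<noteq> 1" using r by (auto simp: a_def)
  have c: "2/r - 1 = 1/a - 1" by (simp add: a_def)
  obtain C1 d1 where d1: "d1 > 0" and
    I1: "\<And>e. 0 < e \<Longrightarrow> e < d1 \<Longrightarrow>
       \<bar>integral {0..2*pi} (\<lambda>t. (1 + uu (1/a - 1) e t) powr a) - IV a (1/a - 1) e\<bar> \<le> C1 * e^3"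
    using int_bound[of "1/a - 1" a] by metis
  obtain C0 d0 where d0: "d0 > 0" and
    I0: "\<And>e. 0 < e \<Longrightarrow> e < d0 \<Longrightarrow>
       \<bar>integral {0..2*pi} (\<lambda>t. (1 + uu 0 e t) powr a) - IV a 0 e\<bar> \<le> C0 * e^3"
    using int_bound[of 0 a] by metis
  define Cs where "Cs = \<bar>C1\<bar> + \<bar>C0\<bar> + 1"
  have Cs: "Cs > 0" by (simp add: Cs_def add_nonneg_pos)
  have g: "2*pi*(a-1)^2 > 0" using a1 by simp
  define b where "b = min (min d1 d0) (2*pi*(a-1)^2 / Cs)"
  have b: "b > 0" using d1 d0 g Cs by (simp add: b_def)
  show ?thesis unfolding eventually_at_right_field
  proof (intro exI[of _ b] conjI allI impI)
    show "0 < b" by (rule b)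
    fix e :: real assume e: "0 < e" "e < b"
    let ?J1 = "integral {0..2*pi} (\<lambda>t. (1 + uu (1/a - 1) e t) powr a)"
    let ?J0 = "integral {0..2*pi} (\<lambda>t. (1 + uu 0 e t) powr a)"
    have e1: "e < d1" "e < d0" using e by (auto simp: b_def)
    have "Cs * e < 2*pi*(a-1)^2" using e Cs by (simp add: b_def field_simps)
    then have "(C1 + C0) * e < 2*pi*(a-1)^2" unfolding Cs_def using e
      by (smt (verit, best) abs_ge_zero abs_le_self_iff mult_right_mono)
    then have "(C1 + C0) * e * e^2 < 2*pi*(a-1)^2 * e^2" using e by (intro mult_strict_right_mono) auto
    then have key: "(C1 + C0) * e^3 < 2*pi*(a-1)^2 * e^2" by (simp add: power2_eq_square power3_eq_cube algebra_simps)
    have "?J1 - ?J0 \<le> (IV a (1/a - 1) e - IV a 0 e) + (C1 + C0) * e^3"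
      using I1[OF e(1) e1(1)] I0[OF e(1) e1(2)] by (simp add: algebra_simps abs_le_iff)
    also have "\<dots> < 0" using IV_diff[OF a0, of e] key by simp
    finally have lt: "?J1 < ?J0" by simp
    have "((1/(2*pi)) * ?J1) powr (1/r) < ((1/(2*pi)) * ?J0) powr (1/r)"
      using r lt by (intro powr_less_mono2 mult_nonneg_nonneg int_nonneg_powr mult_strict_left_mono) auto
    then show "((1/(2*pi)) * integral {0..2*pi} (\<lambda>t. (1 + uu (2/r - 1) e t) powr (r/2))) powr (1/r)
    < ((1/(2*pi)) * integral {0..2*pi} (\<lambda>t. (1 + uu 0 e t) powr (r/2))) powr (1/r)"
      unfolding c a_def .
  qed
qed



lemma cmod_sq:
  fixes c e t :: real
  shows "(cmod (complex_of_real (c*e) * cnj (cis t) + 1 + complex_of_real e * cis t))^2 = 1 + uu c e t"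
  unfolding cmod_power2 uu_def by (simp add: power2_eq_square algebra_simps)

lemma meas_cmod:
  fixes c e :: real
  shows "(\<lambda>t. ereal (cmod (complex_of_real (c*e) * cnj (cis t) + 1 + complex_of_real e * cis t)))
     \<in> borel_measurable (lebesgue_on {0..2*pi})"
proof -
  have "continuous_on {0..2*pi} (\<lambda>t. cmod (complex_of_real (c*e) * cnj (cis t) + 1 + complex_of_real e * cis t))"
    unfolding cis_conv_exp by (intro continuous_intros)
  then have "(\<lambda>t. cmod (complex_of_real (c*e) * cnj (cis t) + 1 + complex_of_real e * cis t))
     \<in> borel_measurable (lebesgue_on {0..2*pi})"
    by (rule continuous_imp_measurable_on_sets_lebesgue) auto
  then show ?thesis by (rule borel_measurable_ereal)
qed

lemma inf_case:
  "\<forall>\<^sub>F e in at_right (0::real).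
    real_of_ereal (esssup (lebesgue_on {0..2*pi})
       (\<lambda>t. ereal (cmod (complex_of_real ((-1)*e) * cnj (cis t) + 1 + complex_of_real e * cis t))))
    < real_of_ereal (esssup (lebesgue_on {0..2*pi})
       (\<lambda>t. ereal (cmod (complex_of_real (0*e) * cnj (cis t) + 1 + complex_of_real e * cis t))))"
  unfolding eventually_at_right_field
proof (intro exI[of _ "1/3"] conjI allI impI)
  fix e :: real assume e: "0 < e" "e < 1/3"
  define M where "M = lebesgue_on {0..2*pi}"
  define f1 where "f1 = (\<lambda>t. ereal (cmod (complex_of_real ((-1)*e) * cnj (cis t) + 1 + complex_of_real e * cis t)))"
  define f0 where "f0 = (\<lambda>t. ereal (cmod (complex_of_real (0*e) * cnj (cis t) + 1 + complex_of_real e * cis t)))"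
  define z0 where "z0 = sqrt (1 + 4*e^2)"
  have z0: "z0 \<ge> 0" by (simp add: z0_def)
  have m1: "f1 \<in> borel_measurable M" unfolding f1_def M_def by (rule meas_cmod)
  have m0: "f0 \<in> borel_measurable M" unfolding f0_def M_def by (rule meas_cmod)
  have b1: "f1 t \<le> ereal z0" for t
  proof -
    have "(cmod (complex_of_real ((-1)*e) * cnj (cis t) + 1 + complex_of_real e * cis t))^2 = 1 + 4*e^2*(sin t)^2"
      unfolding cmod_sq uu_def by simp
    also have "\<dots> \<le> 1 + 4*e^2"
    proof -
      have "(sin t)^2 \<le> 1" using sin_cos_squared_add[of t] zero_le_power2[of "cos t"] by linarith
      then have "e^2 * (sin t)^2 \<le> e^2" by (simp add: mult_left_le)
      then show ?thesis by simp
    qed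
    finally show ?thesis unfolding f1_def z0_def by (simp add: real_le_rsqrt)
  qed
  have L: "esssup M f1 \<le> ereal z0"
    by (rule esssup_I[OF m1]) (use b1 in \<open>auto intro: AE_I2\<close>)
  have L': "real_of_ereal (esssup M f1) \<le> z0"
    using L z0 by (cases "esssup M f1") auto
  have b0: "f0 t \<le> ereal (1 + e)" for t
  proof -
    have "cmod (1 + complex_of_real e * cis t) \<le> cmod 1 + cmod (complex_of_real e * cis t)"
      by (rule norm_triangle_ineq)
    also have "\<dots> = 1 + e" using e by (simp add: norm_mult)
    finally show ?thesis unfolding f0_def by simp
  qed
  have U: "esssup M f0 \<le> ereal (1 + e)"
    by (rule esssup_I[OF m0]) (use b0 in \<open>auto intro: AE_I2\<close>)
  have big: "ereal z0 < f0 t" if t: "t \<in> {0..pi/3}" for t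
  proof -
    have "cos (pi/3) \<le> cos t" using t by (intro cos_monotone_0_pi_le) auto
    then have ct: "1/2 \<le> cos t" by (simp add: cos_60)
    have "1 + 4*e^2 < 1 + 2*e*(1/2) + e^2" using e by (simp add: power2_eq_square field_simps)
    also have "\<dots> \<le> 1 + 2*e*cos t + e^2" using ct e by simp
    also have "\<dots> = (cmod (complex_of_real (0*e) * cnj (cis t) + 1 + complex_of_real e * cis t))^2"
      unfolding cmod_sq uu_def by (simp add: algebra_simps)
    finally have "z0^2 < (cmod (complex_of_real (0*e) * cnj (cis t) + 1 + complex_of_real e * cis t))^2"
      unfolding z0_def by simp
    then have "z0 < cmod (complex_of_real (0*e) * cnj (cis t) + 1 + complex_of_real e * cis t)"
      by (rule power2_less_imp_less) simp
    then show ?thesis unfolding f0_def by simp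
  qed
  have R: "ereal z0 < esssup M f0"
  proof (rule ccontr)
    assume "\<not> ereal z0 < esssup M f0"
    then have le: "esssup M f0 \<le> ereal z0" by simp
    have "AE t in M. f0 t \<le> esssup M f0" by (rule esssup_AE)
    then obtain N where N: "{t \<in> space M. \<not> f0 t \<le> esssup M f0} \<subseteq> N" "emeasure M N = 0" "N \<in> sets M"
      by (rule AE_E)
    have "{0..pi/3} \<subseteq> N"
    proof
      fix t assume t: "t \<in> {0..pi/3}"
      then have "t \<in> space M" by (auto simp: M_def)
      moreover have "\<not> f0 t \<le> esssup M f0" using big[OF t] le by auto
      ultimately show "t \<in> N" using N(1) by blast
    qed
    then have "emeasure M {0..pi/3} \<le> emeasure M N" using N(3) by (rule emeasure_mono)
    then have "ennreal (pi/3) \<le> 0" using N(2) leb_pos unfolding M_def by simp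
    then show False by simp
  qed
  have R': "z0 < real_of_ereal (esssup M f0)"
    using R U by (cases "esssup M f0") auto
  show "real_of_ereal (esssup (lebesgue_on {0..2*pi})
       (\<lambda>t. ereal (cmod (complex_of_real ((-1)*e) * cnj (cis t) + 1 + complex_of_real e * cis t))))
    < real_of_ereal (esssup (lebesgue_on {0..2*pi})
       (\<lambda>t. ereal (cmod (complex_of_real (0*e) * cnj (cis t) + 1 + complex_of_real e * cis t))))"
    using L' R' unfolding M_def f1_def f0_def by linarith
qed simp



theorem lemma2p1:
  fixes p :: ereal
  assumes "1 \<le> p" and "p \<noteq> 2"
  shows "\<forall>\<^sub>F \<epsilon> in at_right (0::real).
           Lp_T p (\<lambda>z. complex_of_real (c_p p * \<epsilon>) * cnj z + 1 + complex_of_real \<epsilon> * z)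
             < Lp_T p (\<lambda>z. 1 + complex_of_real \<epsilon> * z)"
proof (cases "p = \<infinity>")
  case True
  have cp: "c_p p = -1" using True by (simp add: c_p_def)
  have eq0: "(\<lambda>t. ereal (cmod ((\<lambda>z. 1 + complex_of_real e * z) (cis t))))
    = (\<lambda>t. ereal (cmod (complex_of_real (0*e) * cnj (cis t) + 1 + complex_of_real e * cis t)))" for e
    by simp
  show ?thesis
    unfolding Lp_T_def cp if_P[OF True] eq0 using inf_case by simp
next
  case False
  obtain r where pr: "p = ereal r" using False assms(1) by (cases p) auto
  have r: "1 \<le> r" "r \<noteq> 2" using assms pr by auto
  have cp: "c_p p = 2/r - 1" using pr by (simp add: c_p_def)
  have eq1: "(\<lambda>t. cmod ((\<lambda>z. complex_of_real (c_p p * e) * cnj z + 1 + complex_of_real e * z) (cis t)) powr real_of_ereal p)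
     = (\<lambda>t. (1 + uu (2/r - 1) e t) powr (r/2))" for e
    by (rule ext) (simp only: cp real_of_ereal.simps cmod_eq, simp only: pr real_of_ereal.simps)
  have eq0: "(\<lambda>t. cmod ((\<lambda>z. 1 + complex_of_real e * z) (cis t)) powr real_of_ereal p)
     = (\<lambda>t. (1 + uu 0 e t) powr (r/2))" for e
    by (rule ext) (simp only: pr real_of_ereal.simps cmod_eq0)
  show ?thesis
    unfolding Lp_T_def if_not_P[OF False] eq1 eq0 using finite_case[OF r] by (simp only: pr real_of_ereal.simps)
qed

end
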